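(* Let $n_1,n_2,n_3\in\mathbb{N}$, let $\sigma$ be a segment label map on $G=\{1,\dots,n_1\}\times\{1,\dots,n_2\}\times\{1,\dots,n_3\}$, fix any decomposition of $T$ into blocks, let $\tau=\mathrm{LABEL}(\sigma,T)$ and let $\tau'$ be the output of the block-wise method. Then $\tau$ and $\tau'$ are isomorphic with respect to the set of all 2-cells of $T$.
   Context: Voxel grid and segmentation: $G=\{1,\dots,n_1\}\times\{1,\dots,n_2\}\times\{1,\dots,n_3\}$; voxels $v,w$ are adjacent iff $\sum_i|v_i-w_i|=1$. A segment label map is $\sigma:G\to\mathbb{N}=\{1,2,\dots\}$ such that each level set $\sigma^{-1}(l)$ is connected w.r.t. this adjacency. Topological grid: $T=\{1,\dots,2n_1-1\}\times\{1,\dots,2n_2-1\}\times\{1,\dots,2n_3-1\}$; a cell with exactly $j$ odd coordinates is a $j$-cell. Voxel $r$ corresponds to the 3-cell $2r-1$. Two cells are 6-neighbors if they differ by $1$ in exactly one coordinate. For a $j$-cell $t$, $\Gamma(t)$ is the set of 6-neighbors of $t$ in $T$ that are $(j+1)$-cells. Cells $t_1,t_2$ are connected, $t_1\leftrightarrow t_2$, iff there is $t\in T$ with $t_1,t_2\in\Gamma(t)$. Procedure LABEL: for a voxel box $\prod_i\{a_i,\dots,b_i\}\subseteq G$ let $B=\prod_i\{2a_i-1,\dots,2b_i-1\}$ be its cell box. $\mathrm{LABEL}(\sigma,B)$ produces $\lambda:B\to\mathbb{N}_0$: (1) $\lambda(2r-1)=\sigma(r)$ for 3-cells. (2) For $j=2,1,0$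 in this order: for each $j$-cell $t\in B$ let $\theta(t)$ be the set of positive integers occurring exactly once in $(\lambda(s))_{s\in\Gamma(t)}$; $t$ is active iff $\theta(t)\ne\emptyset$, inactive $j$-cells get label $0$; the active $j$-cells of $B$ are partitioned into maximal sets of cells with equal $\theta$ that are connected by $\leftrightarrow$-paths inside the set; these classes are numbered $1,\dots,m_j(B)$ arbitrarily and each active $j$-cell gets its class number. Reference labeling: $\tau=\mathrm{LABEL}(\sigma,T)$. Block-wise method: for each axis $i$ choose odd integers $1=a^i_0<\dots<a^i_{m_i}=2n_i-1$; blocks are the boxes $\prod_i\{a^i_{k_i-1},\dots,a^i_{k_i}\}$. Step 1: $\lambda_B=\mathrm{LABEL}(\sigma,B)$ for each block. Step 2: with blocks ordered $B_1,\dots,B_K$, add offset $\sum_{k'<k}m_j(B_{k'})$ to each positive $j$-cell label of $\lambda_{B_k}$ ($j\in\{0,1,2\}$). Step 3: for $j\in\{1,2\}$, via union–find, unite the labels received in different blocks by any active $j$-cell lying in several blocks, and replace every positive $j$-cell label by its set representative. Step 4: for each 0-cell $t_0$ and each pair of distinct 1-cell labels occurring exactly once among the current labels of $\Gamma(t_0)$, merge the two labels if the corresponding 1-cells bound the same set of current 2-cell labels; if any merge took place at $t_0$, recompute the activity of $t_0$ and set its label to $0$ if inactive. The result is $\tau':T\to\mathbb{N}_0$. Isomorphism w.r.t. $U\subseteq T$: for all $u\in U$, $\tau(u)=0\Leftrightarrow\tau'(u)=0$, and for all $u,v\in U$, $\tau(u)=\tau(v)\Leftrightarrow\tau'(u)=\tau'(v)$.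 *)

theory Defs
  imports Main
begin

text \<open>Cells of the topological grid and voxels are both represented as integer triples.\<close>
type_synonym cell = "int \<times> int \<times> int"

text \<open>Number of odd coordinates: a cell with exactly j odd coordinates is a j-cell.\<close>
definition dimc :: "cell \<Rightarrow> nat" where
  "dimc t = (case t of (a, b, c) \<Rightarrow>
     (if odd a then 1 else 0) + (if odd b then 1 else 0) + (if odd c then 1 else 0))"

text \<open>L1 distance; two integer triples are 6-neighbours / adjacent iff it equals 1.\<close>
definition l1dist :: "cell \<Rightarrow> cell \<Rightarrow> int" where
  "l1dist s t = (case s of (a, b, c) \<Rightarrow> case t of (a', b', c') \<Rightarrow>
     \<bar>a - a'\<bar> + \<bar>b - b'\<bar> + \<bar>c - c'\<bar>)"

definition box :: "int \<times> int \<Rightarrow> int \<times> int \<Rightarrow> int \<times> int \<Rightarrow> cell set" where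
  "box I J K = {(a, b, c). fst I \<le> a \<and> a \<le> snd I \<and> fst J \<le> b \<and> b \<le> snd J
                         \<and> fst K \<le> c \<and> c \<le> snd K}"

definition vgrid :: "nat \<Rightarrow> nat \<Rightarrow> nat \<Rightarrow> cell set" where
  "vgrid n1 n2 n3 = box (1, int n1) (1, int n2) (1, int n3)"

definition tgrid :: "nat \<Rightarrow> nat \<Rightarrow> nat \<Rightarrow> cell set" where
  "tgrid n1 n2 n3 = box (1, 2 * int n1 - 1) (1, 2 * int n2 - 1) (1, 2 * int n3 - 1)"

definition connected_set :: "cell set \<Rightarrow> bool" where
  "connected_set S \<longleftrightarrow>
     (\<forall>x\<in>S. \<forall>y\<in>S. (x, y) \<in> {(u, v). u \<in> S \<and> v \<in> S \<and> l1dist u v = 1}\<^sup>*)"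

definition segment_label_map :: "nat \<Rightarrow> nat \<Rightarrow> nat \<Rightarrow> (cell \<Rightarrow> nat) \<Rightarrow> bool" where
  "segment_label_map n1 n2 n3 \<sigma> \<longleftrightarrow>
     (\<forall>r\<in>vgrid n1 n2 n3. 1 \<le> \<sigma> r) \<and>
     (\<forall>l. connected_set {r \<in> vgrid n1 n2 n3. \<sigma> r = l})"

text \<open>Gamma(t) taken inside the cell box B (the domain of the labeling).\<close>
definition cobd :: "cell set \<Rightarrow> cell \<Rightarrow> cell set" where
  "cobd B t = {s \<in> B. l1dist s t = 1 \<and> dimc s = dimc t + 1}"

definition cconn :: "cell set \<Rightarrow> cell \<Rightarrow> cell \<Rightarrow> bool" where
  "cconn Tg t1 t2 \<longleftrightarrow> (\<exists>t\<in>Tg. t1 \<in> cobd Tg t \<and> t2 \<in> cobd Tg t)"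

definition theta :: "(cell \<Rightarrow> nat) \<Rightarrow> cell set \<Rightarrow> cell \<Rightarrow> nat set" where
  "theta lab B t = {l. 0 < l \<and> card {s \<in> cobd B t. lab s = l} = 1}"

text \<open>The voxel r with 2r-1 = t.\<close>
definition voxel_of :: "cell \<Rightarrow> cell" where
  "voxel_of t = (case t of (a, b, c) \<Rightarrow> ((a + 1) div 2, (b + 1) div 2, (c + 1) div 2))"

text \<open>is_LABEL Tg sigma B lab: lab is a possible output of LABEL(sigma, B)
  (the numbering of classes being arbitrary), Tg being the full topological grid.\<close>
definition is_LABEL :: "cell set \<Rightarrow> (cell \<Rightarrow> nat) \<Rightarrow> cell set \<Rightarrow> (cell \<Rightarrow> nat) \<Rightarrow> bool" where
  "is_LABEL Tg \<sigma> B lab \<longleftrightarrow>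
     (\<forall>t\<in>B. dimc t = 3 \<longrightarrow> lab t = \<sigma> (voxel_of t)) \<and>
     (\<forall>j\<in>{0, 1, 2}.
        let A = {t \<in> B. dimc t = j \<and> theta lab B t \<noteq> {}} in
        (\<forall>t\<in>B. dimc t = j \<and> theta lab B t = {} \<longrightarrow> lab t = 0) \<and>
        (\<forall>s\<in>A. \<forall>t\<in>A. lab s = lab t \<longleftrightarrow>
           (theta lab B s = theta lab B t \<and>
            (s, t) \<in> {(x, y). x \<in> A \<and> y \<in> A \<and> theta lab B x = theta lab B s \<and>
                              theta lab B y = theta lab B s \<and> cconn Tg x y}\<^sup>*)) \<and>
        lab ` A = {1..card (lab ` A)})"

definition mcount :: "(cell \<Rightarrow> nat) \<Rightarrow> cell set \<Rightarrow> nat \<Rightarrow> nat" where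
  "mcount lab B j = card (lab ` {t \<in> B. dimc t = j \<and> 0 < lab t})"

definition valid_breaks :: "nat \<Rightarrow> int list \<Rightarrow> bool" where
  "valid_breaks n as \<longleftrightarrow> as \<noteq> [] \<and> hd as = 1 \<and> last as = 2 * int n - 1 \<and>
     sorted_wrt (<) as \<and> (\<forall>a\<in>set as. odd a)"

text \<open>Axis intervals {a_(k-1)..a_k}; in the degenerate case m = 0 (n = 1) the single interval {1..1}.\<close>
definition intervals :: "int list \<Rightarrow> (int \<times> int) list" where
  "intervals as = (if length as = 1 then [(hd as, hd as)] else zip as (tl as))"

definition blocks :: "int list \<Rightarrow> int list \<Rightarrow> int list \<Rightarrow> cell set set" where
  "blocks as1 as2 as3 = {box I J K | I J K.
     I \<in> set (intervals as1) \<and> J \<in> set (intervals as2) \<and> K \<in> set (intervals as3)}"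

text \<open>Output tau' of the block-wise method, on 2-cells (steps 1-3; step 4 only changes
  labels of 1-cells and 0-cells).  Blocks are ordered arbitrarily (list Bs), each block
  gets an arbitrary LABEL output, offsets are added, labels of 2-cells shared by several
  blocks are united (equivalence closure) and each label is replaced by a representative
  of its class.\<close>
definition blockwise_2cells ::
  "nat \<Rightarrow> nat \<Rightarrow> nat \<Rightarrow> (cell \<Rightarrow> nat) \<Rightarrow> int list \<Rightarrow> int list \<Rightarrow> int list \<Rightarrow> (cell \<Rightarrow> nat) \<Rightarrow> bool" where
  "blockwise_2cells n1 n2 n3 \<sigma> as1 as2 as3 \<tau>' \<longleftrightarrow>
    (\<exists>Bs lams rep.
      distinct Bs \<and> set Bs = blocks as1 as2 as3 \<and> length lams = length Bs \<and>
      (\<forall>k<length Bs. is_LABEL (tgrid n1 n2 n3) \<sigma> (Bs ! k) (lams ! k)) \<and>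
      (let off = (\<lambda>k. \<Sum>k'<k. mcount (lams ! k') (Bs ! k') 2);
           lab = (\<lambda>k t. (lams ! k) t + off k);
           S = {(lab k t, lab k' t) | k k' t. k < length Bs \<and> k' < length Bs \<and> k \<noteq> k' \<and>
                  t \<in> Bs ! k \<and> t \<in> Bs ! k' \<and> dimc t = 2 \<and>
                  0 < (lams ! k) t \<and> 0 < (lams ! k') t};
           R = (S \<union> S\<inverse>)\<^sup>*
       in (\<forall>k<length Bs. \<forall>t\<in>Bs ! k. dimc t = 2 \<and> 0 < (lams ! k) t \<longrightarrow>
              (lab k t, rep (lab k t)) \<in> R) \<and>
          (\<forall>l l'. (l, l') \<in> R \<longrightarrow> rep l = rep l') \<and>
          (\<forall>k<length Bs. \<forall>t\<in>Bs ! k. dimc t = 2 \<longrightarrow>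
              \<tau>' t = (if (lams ! k) t = 0 then 0 else rep (lab k t)))))"

definition label_iso :: "cell set \<Rightarrow> (cell \<Rightarrow> nat) \<Rightarrow> (cell \<Rightarrow> nat) \<Rightarrow> bool" where
  "label_iso U \<tau> \<tau>' \<longleftrightarrow>
     (\<forall>u\<in>U. \<tau> u = 0 \<longleftrightarrow> \<tau>' u = 0) \<and>
     (\<forall>u\<in>U. \<forall>v\<in>U. \<tau> u = \<tau> v \<longleftrightarrow> \<tau>' u = \<tau>' v)"

end

theory Submission
  imports Defs
begin
definition nr :: "int \<Rightarrow> int \<Rightarrow> bool" where
  "nr z w \<longleftrightarrow> \<bar>w - z\<bar> \<le> 1 \<and> (odd z \<longrightarrow> w = z)"

definition near :: "cell \<Rightarrow> cell \<Rightarrow> bool" where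
  "near u s \<longleftrightarrow> nr (fst u) (fst s) \<and> nr (fst (snd u)) (fst (snd s)) \<and> nr (snd (snd u)) (snd (snd s))"

lemma nbr:
  assumes "l1dist s u = 1" "dimc s = dimc u + 1"
  shows "near u s"
proof -
  obtain a b c where u: "u = (a,b,c)" by (cases u) auto
  obtain a' b' c' where s: "s = (a',b',c')" by (cases s) auto
  have h: "\<bar>a' - a\<bar> + \<bar>b' - b\<bar> + \<bar>c' - c\<bar> = 1"
    "(if odd a' then 1 else 0) + (if odd b' then 1 else 0) + (if odd c' then 1 else (0::nat))
     = (if odd a then 1 else 0) + (if odd b then 1 else 0) + (if odd c then 1 else 0) + 1"
    using assms unfolding u s l1dist_def dimc_def by auto
  have "(a'=a \<and> b'=b \<and> (c'=c+1 \<or> c'=c-1)) \<or> (a'=a \<and> (b'=b+1 \<or> b'=b-1) \<and> c'=c) \<or> ((a'=a+1 \<or> a'=a-1) \<and> b'=b \<and> c'=c)"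
    using h(1) by arith
  then show ?thesis using h(2) unfolding u s near_def nr_def
    by (auto split: if_splits)
qed

lemma in_iv:
  assumes "odd p" "odd q" "p \<le> z" "z \<le> q" "nr z w"
  shows "p \<le> w \<and> w \<le> q"
  using assms unfolding nr_def
  by (cases "odd z") (auto, presburger+)

lemma zip_cover:
  "length xs \<ge> 2 \<Longrightarrow> hd xs \<le> (x::int) \<Longrightarrow> x \<le> last xs \<Longrightarrow> \<exists>I\<in>set (zip xs (tl xs)). fst I \<le> x \<and> x \<le> snd I"
proof (induction xs)
  case Nil then show ?case by simp
next
  case (Cons a ys)
  then obtain b zs where ys: "ys = b # zs" by (cases ys) auto
  show ?case
  proof (cases "x \<le> b")
    case True then show ?thesis using Cons.prems ys by auto
  next
    case False
    then have "zs \<noteq> []" using Cons.prems ys by auto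
    have l: "length ys \<ge> 2" using ys \<open>zs \<noteq> []\<close> by (cases zs) auto
    have "hd ys \<le> x" using False ys by simp
    moreover have "x \<le> last ys" using Cons.prems ys by simp
    ultimately have "\<exists>I\<in>set (zip ys (tl ys)). fst I \<le> x \<and> x \<le> snd I"
      using Cons.IH l by blast
    then show ?thesis using ys by auto
  qed
qed

lemma iv_cover:
  assumes "as \<noteq> []" "hd as \<le> x" "x \<le> last as"
  shows "\<exists>I\<in>set (intervals as). fst I \<le> x \<and> x \<le> snd I"
proof (cases "length as = 1")
  case True
  then obtain a where "as = [a]" by (cases as) auto
  then show ?thesis using assms by (simp add: intervals_def)
next
  case False
  moreover have "length as \<noteq> 0" using assms by simp
  ultimately have "length as \<ge> 2" by arith
  then show ?thesis using zip_cover[OF _ assms(2,3)] False by (simp add: intervals_def)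
qed

lemma tlD: "x \<in> set (tl xs) \<Longrightarrow> x \<in> set xs"
  by (cases xs) auto

lemma iv_set: "I \<in> set (intervals as) \<Longrightarrow> fst I \<in> set as \<and> snd I \<in> set as"
proof (cases I)
  case (Pair p q)
  assume "I \<in> set (intervals as)"
  then show ?thesis unfolding intervals_def Pair
    by (auto split: if_splits dest: set_zip_leftD set_zip_rightD tlD intro: hd_in_set)
qed

lemma vb_range:
  assumes "valid_breaks n as" "x \<in> set as"
  shows "1 \<le> x \<and> x \<le> 2 * int n - 1 \<and> odd x"
proof -
  have s: "sorted_wrt (<) as" and ne: "as \<noteq> []" using assms by (auto simp: valid_breaks_def)
  obtain i where i: "i < length as" "x = as ! i" using assms(2) by (auto simp: in_set_conv_nth)
  have "hd as \<le> x" using i s ne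
    by (metis hd_conv_nth less_imp_le_nat order.order_iff_strict sorted_wrt_iff_nth_less gr_zeroI)
  moreover have "x \<le> last as" using i s ne
    by (metis last_conv_nth diff_Suc_1 less_Suc_eq_le order.order_iff_strict sorted_wrt_iff_nth_less Suc_pred length_greater_0_conv)
  ultimately show ?thesis using assms by (auto simp: valid_breaks_def)
qed

lemma iv_props:
  assumes "valid_breaks n as" "I \<in> set (intervals as)"
  shows "odd (fst I) \<and> odd (snd I) \<and> 1 \<le> fst I \<and> snd I \<le> 2 * int n - 1"
  using iv_set[OF assms(2)] vb_range[OF assms(1)] by blast

lemma blk_box:
  assumes "B \<in> blocks as1 as2 as3"
  obtains I J K where "B = box I J K" "I \<in> set (intervals as1)" "J \<in> set (intervals as2)" "K \<in> set (intervals as3)"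
  using assms unfolding blocks_def by blast

lemma blk_sub:
  assumes "valid_breaks n1 as1" "valid_breaks n2 as2" "valid_breaks n3 as3"
    "B \<in> blocks as1 as2 as3"
  shows "B \<subseteq> tgrid n1 n2 n3"
proof -
  obtain I J K where B: "B = box I J K" "I \<in> set (intervals as1)" "J \<in> set (intervals as2)" "K \<in> set (intervals as3)"
    using blk_box[OF assms(4)] by blast
  note p = iv_props[OF assms(1) B(2)] iv_props[OF assms(2) B(3)] iv_props[OF assms(3) B(4)]
  show ?thesis unfolding B(1) tgrid_def box_def using p by auto
qed

lemma blk_near:
  assumes "valid_breaks n1 as1" "valid_breaks n2 as2" "valid_breaks n3 as3"
    "B \<in> blocks as1 as2 as3" "u \<in> B" "near u s"
  shows "s \<in> B"
proof -
  obtain I J K where B: "B = box I J K" "I \<in> set (intervals as1)" "J \<in> set (intervals as2)" "K \<in> set (intervals as3)"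
    using blk_box[OF assms(4)] by blast
  note p = iv_props[OF assms(1) B(2)] iv_props[OF assms(2) B(3)] iv_props[OF assms(3) B(4)]
  obtain a b c where u: "u = (a,b,c)" by (cases u) auto
  obtain a' b' c' where s: "s = (a',b',c')" by (cases s) auto
  have uu: "fst I \<le> a" "a \<le> snd I" "fst J \<le> b" "b \<le> snd J" "fst K \<le> c" "c \<le> snd K"
    using assms(5) unfolding B(1) u box_def by auto
  have nn: "nr a a'" "nr b b'" "nr c c'" using assms(6) unfolding u s near_def by auto
  show ?thesis unfolding B(1) s box_def
    using in_iv[of "fst I" "snd I" a a'] in_iv[of "fst J" "snd J" b b'] in_iv[of "fst K" "snd K" c c'] p uu nn
    by auto
qed

lemma blk_cover:
  assumes "valid_breaks n1 as1" "valid_breaks n2 as2" "valid_breaks n3 as3"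
    "t \<in> tgrid n1 n2 n3"
  shows "\<exists>B\<in>blocks as1 as2 as3. t \<in> B"
proof -
  obtain a b c where t: "t = (a,b,c)" by (cases t) auto
  have r: "1 \<le> a" "a \<le> 2 * int n1 - 1" "1 \<le> b" "b \<le> 2 * int n2 - 1" "1 \<le> c" "c \<le> 2 * int n3 - 1"
    using assms(4) unfolding t tgrid_def box_def by auto
  obtain I where I: "I \<in> set (intervals as1)" "fst I \<le> a \<and> a \<le> snd I"
    using iv_cover[of as1 a] assms(1) r unfolding valid_breaks_def by auto
  obtain J where J: "J \<in> set (intervals as2)" "fst J \<le> b \<and> b \<le> snd J"
    using iv_cover[of as2 b] assms(2) r unfolding valid_breaks_def by auto
  obtain K where K: "K \<in> set (intervals as3)" "fst K \<le> c \<and> c \<le> snd K"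
    using iv_cover[of as3 c] assms(3) r unfolding valid_breaks_def by auto
  have "box I J K \<in> blocks as1 as2 as3" using I J K unfolding blocks_def by blast
  moreover have "t \<in> box I J K" using I J K unfolding t box_def by auto
  ultimately show ?thesis by blast
qed

lemma cobd_eq:
  assumes "valid_breaks n1 as1" "valid_breaks n2 as2" "valid_breaks n3 as3"
    "B \<in> blocks as1 as2 as3" "u \<in> B"
  shows "cobd B u = cobd (tgrid n1 n2 n3) u"
  using blk_sub[OF assms(1-4)] blk_near[OF assms(1-5)] nbr unfolding cobd_def by blast

lemma blk_pair:
  assumes "valid_breaks n1 as1" "valid_breaks n2 as2" "valid_breaks n3 as3"
    "t \<in> tgrid n1 n2 n3" "x \<in> cobd (tgrid n1 n2 n3) t" "y \<in> cobd (tgrid n1 n2 n3) t"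
  shows "\<exists>B\<in>blocks as1 as2 as3. x \<in> B \<and> y \<in> B"
proof -
  obtain B where B: "B \<in> blocks as1 as2 as3" "t \<in> B" using blk_cover[OF assms(1-4)] by blast
  have "near t x" "near t y" using assms(5,6) nbr unfolding cobd_def by auto
  then show ?thesis using blk_near[OF assms(1-3) B] B(1) by blast
qed

definition actset :: "(cell \<Rightarrow> nat) \<Rightarrow> cell set \<Rightarrow> cell set" where
  "actset lam B = {t \<in> B. dimc t = 2 \<and> theta lam B t \<noteq> {}}"

definition prel :: "cell set \<Rightarrow> (cell \<Rightarrow> nat) \<Rightarrow> cell set \<Rightarrow> cell \<Rightarrow> (cell \<times> cell) set" where
  "prel Tg lam B s = {(x, y). x \<in> actset lam B \<and> y \<in> actset lam B \<and> theta lam B x = theta lam B s \<and>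
                              theta lam B y = theta lam B s \<and> cconn Tg x y}"

lemma L2:
  assumes "is_LABEL Tg \<sigma> B lam"
  shows "\<forall>t\<in>B. dimc t = 2 \<and> theta lam B t = {} \<longrightarrow> lam t = 0"
    "\<forall>s\<in>actset lam B. \<forall>t\<in>actset lam B. lam s = lam t \<longleftrightarrow>
        (theta lam B s = theta lam B t \<and> (s, t) \<in> (prel Tg lam B s)\<^sup>*)"
    "lam ` actset lam B = {1..card (lam ` actset lam B)}"
    "\<forall>t\<in>B. dimc t = 3 \<longrightarrow> lam t = \<sigma> (voxel_of t)"
proof -
  have H: "\<forall>j\<in>{0, 1, 2::nat}.
        let A = {t\<in>B. dimc t = j \<and> theta lam B t \<noteq> {}} in
        (\<forall>t\<in>B. dimc t = j \<and> theta lam B t = {} \<longrightarrow> lam t = 0) \<and>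
        (\<forall>s\<in>A. \<forall>t\<in>A. lam s = lam t \<longleftrightarrow>
           (theta lam B s = theta lam B t \<and>
            (s, t) \<in> {(x, y). x \<in> A \<and> y \<in> A \<and> theta lam B x = theta lam B s \<and>
                              theta lam B y = theta lam B s \<and> cconn Tg x y}\<^sup>*)) \<and>
        lam ` A = {1..card (lam ` A)}"
    using assms unfolding is_LABEL_def by blast
  have "2 \<in> {0, 1, 2::nat}" by simp
  note H2 = bspec[OF H this, unfolded Let_def]
  show "\<forall>t\<in>B. dimc t = 2 \<and> theta lam B t = {} \<longrightarrow> lam t = 0"
    "\<forall>s\<in>actset lam B. \<forall>t\<in>actset lam B. lam s = lam t \<longleftrightarrow>
        (theta lam B s = theta lam B t \<and> (s, t) \<in> (prel Tg lam B s)\<^sup>*)"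
    "lam ` actset lam B = {1..card (lam ` actset lam B)}"
    using H2 unfolding actset_def prel_def by blast+
  show "\<forall>t\<in>B. dimc t = 3 \<longrightarrow> lam t = \<sigma> (voxel_of t)"
    using assms unfolding is_LABEL_def by blast
qed

lemma L2pos:
  assumes "is_LABEL Tg \<sigma> B lam" "u \<in> B" "dimc u = 2"
  shows "0 < lam u \<longleftrightarrow> theta lam B u \<noteq> {}"
proof
  assume "0 < lam u" then show "theta lam B u \<noteq> {}" using L2(1)[OF assms(1)] assms(2,3) by auto
next
  assume "theta lam B u \<noteq> {}"
  then have "u \<in> actset lam B" using assms unfolding actset_def by auto
  then have "lam u \<in> {1..card (lam ` actset lam B)}" using L2(3)[OF assms(1)] by blast
  then show "0 < lam u" by auto
qed

lemma L2le:
  assumes "is_LABEL Tg \<sigma> B lam" "u \<in> B" "dimc u = 2"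
  shows "lam u \<le> mcount lam B 2"
proof -
  have e: "{t \<in> B. dimc t = 2 \<and> 0 < lam t} = actset lam B"
    using L2pos[OF assms(1)] unfolding actset_def by blast
  show ?thesis
  proof (cases "0 < lam u")
    case True
    then have "u \<in> actset lam B" using e assms by blast
    then have "lam u \<in> {1..card (lam ` actset lam B)}" using L2(3)[OF assms(1)] by blast
    then show ?thesis unfolding mcount_def e by auto
  qed auto
qed

lemma theta_cong:
  assumes "cobd B u = cobd T u" "\<forall>s\<in>cobd T u. lam s = tau s"
  shows "theta lam B u = theta tau T u"
proof -
  have "\<And>l. {s \<in> cobd B u. lam s = l} = {s \<in> cobd T u. tau s = l}" using assms by auto
  then show ?thesis by (simp add: theta_def)
qed

lemma R_sym:
  assumes "(a, b) \<in> (S \<union> S\<inverse>)\<^sup>*" shows "(b, a) \<in> (S \<union> S\<inverse>)\<^sup>*"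
proof -
  have "(b, a) \<in> ((S \<union> S\<inverse>)\<inverse>)\<^sup>*" using rtrancl_converseI[OF assms] by (simp add: rtrancl_converse)
  then show ?thesis by (simp add: converse_Un Un_commute)
qed

lemma R_pos:
  assumes "(a, b) \<in> (S \<union> S\<inverse>)\<^sup>*" "\<forall>(x,y)\<in>S. 0 < x \<and> 0 < (y::nat)" "0 < a"
  shows "0 < b"
  using assms(1,3) by (induction rule: rtrancl_induct) (use assms(2) in auto)


theorem proposition2:
  fixes n1 n2 n3 :: nat and \<sigma> \<tau> \<tau>' :: "cell \<Rightarrow> nat" and as1 as2 as3 :: "int list"
  assumes "1 \<le> n1" and "1 \<le> n2" and "1 \<le> n3"
    and "segment_label_map n1 n2 n3 \<sigma>"
    and "valid_breaks n1 as1" and "valid_breaks n2 as2" and "valid_breaks n3 as3"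
    and "is_LABEL (tgrid n1 n2 n3) \<sigma> (tgrid n1 n2 n3) \<tau>"
    and "blockwise_2cells n1 n2 n3 \<sigma> as1 as2 as3 \<tau>'"
  shows "label_iso {t \<in> tgrid n1 n2 n3. dimc t = 2} \<tau> \<tau>'"
proof -
  let ?T = "tgrid n1 n2 n3"
  note vb = assms(5,6,7)
  note LT = assms(8)
  obtain Bs lams rep where BL: "distinct Bs \<and> set Bs = blocks as1 as2 as3 \<and> length lams = length Bs \<and>
      (\<forall>k<length Bs. is_LABEL ?T \<sigma> (Bs ! k) (lams ! k)) \<and> (let off = (\<lambda>k. \<Sum>k'<k. mcount (lams ! k') (Bs ! k') 2);
           lab = (\<lambda>k t. (lams ! k) t + off k);
           S = {(lab k t, lab k' t) | k k' t. k < length Bs \<and> k' < length Bs \<and> k \<noteq> k' \<and>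
                  t \<in> Bs ! k \<and> t \<in> Bs ! k' \<and> dimc t = 2 \<and>
                  0 < (lams ! k) t \<and> 0 < (lams ! k') t};
           R = (S \<union> S\<inverse>)\<^sup>*
       in (\<forall>k<length Bs. \<forall>t\<in>Bs ! k. dimc t = 2 \<and> 0 < (lams ! k) t \<longrightarrow>
              (lab k t, rep (lab k t)) \<in> R) \<and>
          (\<forall>l l'. (l, l') \<in> R \<longrightarrow> rep l = rep l') \<and>
          (\<forall>k<length Bs. \<forall>t\<in>Bs ! k. dimc t = 2 \<longrightarrow>
              \<tau>' t = (if (lams ! k) t = 0 then 0 else rep (lab k t))))"
    using assms(9) unfolding blockwise_2cells_def by (elim exE) (rule that)
  note Bs = BL[THEN conjunct1] BL[THEN conjunct2, THEN conjunct1] BL[THEN conjunct2, THEN conjunct2, THEN conjunct1]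
     BL[THEN conjunct2, THEN conjunct2, THEN conjunct2, THEN conjunct1]
  note L = BL[THEN conjunct2, THEN conjunct2, THEN conjunct2, THEN conjunct2]
  define off where "off = (\<lambda>k. \<Sum>k'<k. mcount (lams ! k') (Bs ! k') 2)"
  define lab where "lab = (\<lambda>k t. (lams ! k) t + off k)"
  define S where "S = {(lab k t, lab k' t) | k k' t. k < length Bs \<and> k' < length Bs \<and> k \<noteq> k' \<and>
                  t \<in> Bs ! k \<and> t \<in> Bs ! k' \<and> dimc t = 2 \<and>
                  0 < (lams ! k) t \<and> 0 < (lams ! k') t}"
  define R where "R = (S \<union> S\<inverse>)\<^sup>*"
  have L1: "\<And>k t. k < length Bs \<Longrightarrow> t \<in> Bs ! k \<Longrightarrow> dimc t = 2 \<Longrightarrow> 0 < (lams ! k) t \<Longrightarrow>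
              (lab k t, rep (lab k t)) \<in> R"
   and L2': "\<And>l l'. (l, l') \<in> R \<Longrightarrow> rep l = rep l'"
   and L3: "\<And>k t. k < length Bs \<Longrightarrow> t \<in> Bs ! k \<Longrightarrow> dimc t = 2 \<Longrightarrow>
              \<tau>' t = (if (lams ! k) t = 0 then 0 else rep (lab k t))"
  proof -
    have "(\<forall>k<length Bs. \<forall>t\<in>Bs ! k. dimc t = 2 \<and> 0 < (lams ! k) t \<longrightarrow>
              (lab k t, rep (lab k t)) \<in> R) \<and>
          (\<forall>l l'. (l, l') \<in> R \<longrightarrow> rep l = rep l') \<and>
          (\<forall>k<length Bs. \<forall>t\<in>Bs ! k. dimc t = 2 \<longrightarrow>
              \<tau>' t = (if (lams ! k) t = 0 then 0 else rep (lab k t)))"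
      using L unfolding Let_def off_def lab_def S_def R_def by assumption
    then show "\<And>k t. k < length Bs \<Longrightarrow> t \<in> Bs ! k \<Longrightarrow> dimc t = 2 \<Longrightarrow> 0 < (lams ! k) t \<Longrightarrow>
              (lab k t, rep (lab k t)) \<in> R"
     and "\<And>l l'. (l, l') \<in> R \<Longrightarrow> rep l = rep l'"
     and "\<And>k t. k < length Bs \<Longrightarrow> t \<in> Bs ! k \<Longrightarrow> dimc t = 2 \<Longrightarrow>
              \<tau>' t = (if (lams ! k) t = 0 then 0 else rep (lab k t))" by blast+
  qed
  have inB: "\<And>k. k < length Bs \<Longrightarrow> Bs ! k \<in> blocks as1 as2 as3" using Bs(2) nth_mem by blast
  have LB: "\<And>k. k < length Bs \<Longrightarrow> is_LABEL ?T \<sigma> (Bs ! k) (lams ! k)" using Bs(4) by blast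
  have subB: "\<And>k. k < length Bs \<Longrightarrow> Bs ! k \<subseteq> ?T" using blk_sub[OF vb] inB by blast
  have TH: "\<And>k u. k < length Bs \<Longrightarrow> u \<in> Bs ! k \<Longrightarrow> dimc u = 2 \<Longrightarrow>
      theta (lams ! k) (Bs ! k) u = theta \<tau> ?T u"
  proof -
    fix k u assume k: "k < length Bs" and u: "u \<in> Bs ! k" and d: "dimc u = 2"
    have ce: "cobd (Bs ! k) u = cobd ?T u" using cobd_eq[OF vb inB[OF k] u] .
    have "\<forall>s\<in>cobd ?T u. (lams ! k) s = \<tau> s"
    proof
      fix s assume s: "s \<in> cobd ?T u"
      then have s1: "s \<in> Bs ! k" "s \<in> ?T" using ce unfolding cobd_def by blast+
      have s3: "dimc s = 3" using s d unfolding cobd_def by auto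
      show "(lams ! k) s = \<tau> s" using L2(4)[OF LB[OF k]] L2(4)[OF LT] s1 s3 by simp
    qed
    then show "theta (lams ! k) (Bs ! k) u = theta \<tau> ?T u" using theta_cong[OF ce] by blast
  qed

  have P: "\<And>k u. k < length Bs \<Longrightarrow> u \<in> Bs ! k \<Longrightarrow> dimc u = 2 \<Longrightarrow> 0 < (lams ! k) u \<longleftrightarrow> 0 < \<tau> u"
  proof -
    fix k u assume k: "k < length Bs" and u: "u \<in> Bs ! k" and d: "dimc u = 2"
    have uT: "u \<in> ?T" using subB[OF k] u by blast
    show "0 < (lams ! k) u \<longleftrightarrow> 0 < \<tau> u"
      using L2pos[OF LB[OF k] u d] L2pos[OF LT uT d] TH[OF k u d] by simp
  qed
  have SB: "\<And>k u v. k < length Bs \<Longrightarrow> u \<in> Bs ! k \<Longrightarrow> v \<in> Bs ! k \<Longrightarrow> dimc u = 2 \<Longrightarrow> dimc v = 2 \<Longrightarrow>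
      0 < (lams ! k) u \<Longrightarrow> (lams ! k) u = (lams ! k) v \<Longrightarrow> \<tau> u = \<tau> v"
  proof -
    fix k u v assume k: "k < length Bs" and u: "u \<in> Bs ! k" and v: "v \<in> Bs ! k"
      and du: "dimc u = 2" and dv: "dimc v = 2" and pu: "0 < (lams ! k) u" and eq: "(lams ! k) u = (lams ! k) v"
    let ?B = "Bs ! k" and ?l = "lams ! k"
    have uA: "u \<in> actset ?l ?B" using L2pos[OF LB[OF k] u du] pu u du unfolding actset_def by auto
    have vA: "v \<in> actset ?l ?B" using L2pos[OF LB[OF k] v dv] pu eq v dv unfolding actset_def by auto
    have th: "theta ?l ?B u = theta ?l ?B v" and pth: "(u, v) \<in> (prel ?T ?l ?B u)\<^sup>*"
      using L2(2)[OF LB[OF k]] uA vA eq by blast+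
    have AA: "\<And>x. x \<in> actset ?l ?B \<Longrightarrow> x \<in> actset \<tau> ?T \<and> theta ?l ?B x = theta \<tau> ?T x"
    proof -
      fix x assume x: "x \<in> actset ?l ?B"
      then have xB: "x \<in> ?B" and dx: "dimc x = 2" unfolding actset_def by auto
      then show "x \<in> actset \<tau> ?T \<and> theta ?l ?B x = theta \<tau> ?T x"
        using TH[OF k xB dx] x subB[OF k] unfolding actset_def by auto
    qed
    have "prel ?T ?l ?B u \<subseteq> prel ?T \<tau> ?T u"
      unfolding prel_def using AA uA by auto
    then have "(u, v) \<in> (prel ?T \<tau> ?T u)\<^sup>*" using pth rtrancl_mono by blast
    moreover have "theta \<tau> ?T u = theta \<tau> ?T v" using th AA uA vA by auto
    ultimately show "\<tau> u = \<tau> v" using L2(2)[OF LT] AA uA vA by blast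
  qed
  have offS: "\<And>k. off (Suc k) = off k + mcount (lams ! k) (Bs ! k) 2" unfolding off_def by simp
  have offM: "\<And>k k'. k \<le> k' \<Longrightarrow> off k \<le> off k'" unfolding off_def
    by (rule sum_mono2) auto
  have lab_rng: "\<And>k t. k < length Bs \<Longrightarrow> t \<in> Bs ! k \<Longrightarrow> dimc t = 2 \<Longrightarrow> 0 < (lams ! k) t \<Longrightarrow>
      off k < lab k t \<and> lab k t \<le> off (Suc k)"
    using L2le[OF LB] offS unfolding lab_def by fastforce
  have UQ: "\<And>k k' t t'. k < length Bs \<Longrightarrow> k' < length Bs \<Longrightarrow> t \<in> Bs ! k \<Longrightarrow> t' \<in> Bs ! k' \<Longrightarrow>
      dimc t = 2 \<Longrightarrow> dimc t' = 2 \<Longrightarrow> 0 < (lams ! k) t \<Longrightarrow> 0 < (lams ! k') t' \<Longrightarrow> lab k t = lab k' t' \<Longrightarrow>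
      \<tau> t = \<tau> t'"
  proof -
    fix k k' t t' assume k: "k < length Bs" and k': "k' < length Bs" and t: "t \<in> Bs ! k" and t': "t' \<in> Bs ! k'"
      and d: "dimc t = 2" and d': "dimc t' = 2" and p: "0 < (lams ! k) t" and p': "0 < (lams ! k') t'"
      and e: "lab k t = lab k' t'"
    have r: "off k < lab k t \<and> lab k t \<le> off (Suc k)" using lab_rng[OF k t d p] .
    have r': "off k' < lab k' t' \<and> lab k' t' \<le> off (Suc k')" using lab_rng[OF k' t' d' p'] .
    have "k = k'"
    proof (rule ccontr)
      assume "k \<noteq> k'"
      then have "Suc k \<le> k' \<or> Suc k' \<le> k" by arith
      then show False
      proof
        assume "Suc k \<le> k'" then have "off (Suc k) \<le> off k'" by (rule offM)
        then show False using r r' e by linarith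
      next
        assume "Suc k' \<le> k" then have "off (Suc k') \<le> off k" by (rule offM)
        then show False using r r' e by linarith
      qed
    qed
    then have "(lams ! k) t = (lams ! k) t'" using e unfolding lab_def by simp
    then show "\<tau> t = \<tau> t'" using SB[OF k t _ d d' p] t' \<open>k = k'\<close> by blast
  qed
  have Spos0: "\<And>x y. (x, y) \<in> S \<Longrightarrow> 0 < x \<and> 0 < y"
  proof -
    fix x y assume "(x, y) \<in> S"
    then obtain k k' t where "x = lab k t" "y = lab k' t" "0 < (lams ! k) t" "0 < (lams ! k') t"
      unfolding S_def by blast
    then show "0 < x \<and> 0 < y" by (simp add: lab_def)
  qed
  have Spos: "\<forall>(x,y)\<in>S. 0 < x \<and> 0 < y" using Spos0 by blast
  have Rsym: "\<And>a b. (a, b) \<in> R \<Longrightarrow> (b, a) \<in> R" unfolding R_def by (rule R_sym)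
  have Rtr: "\<And>a b c. (a, b) \<in> R \<Longrightarrow> (b, c) \<in> R \<Longrightarrow> (a, c) \<in> R" unfolding R_def by (rule rtrancl_trans)
  have INV: "\<And>L L'. (L, L') \<in> R \<Longrightarrow> \<forall>k t. k < length Bs \<and> t \<in> Bs ! k \<and> dimc t = 2 \<and> 0 < (lams ! k) t \<and> lab k t = L
     \<longrightarrow> (\<exists>k' t'. k' < length Bs \<and> t' \<in> Bs ! k' \<and> dimc t' = 2 \<and> 0 < (lams ! k') t' \<and> lab k' t' = L' \<and> \<tau> t' = \<tau> t)"
  proof -
    fix L L' assume "(L, L') \<in> R"
    then show "?thesis L L'" unfolding R_def
    proof (induction rule: rtrancl_induct)
      case base then show ?case by blast
    next
      case (step M M')
      show ?case
      proof (intro allI impI)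
        fix k t assume h: "k < length Bs \<and> t \<in> Bs ! k \<and> dimc t = 2 \<and> 0 < (lams ! k) t \<and> lab k t = L"
        obtain k1 t1 where 1: "k1 < length Bs" "t1 \<in> Bs ! k1" "dimc t1 = 2" "0 < (lams ! k1) t1" "lab k1 t1 = M" "\<tau> t1 = \<tau> t"
          using step.IH h by blast
        from step.hyps(2) consider "(M, M') \<in> S" | "(M', M) \<in> S" by blast
        then show "\<exists>k' t'. k' < length Bs \<and> t' \<in> Bs ! k' \<and> dimc t' = 2 \<and> 0 < (lams ! k') t' \<and> lab k' t' = M' \<and> \<tau> t' = \<tau> t"
        proof cases
          case 1
          then obtain a b s where s: "M = lab a s" "M' = lab b s" "a < length Bs" "b < length Bs"
            "s \<in> Bs ! a" "s \<in> Bs ! b" "dimc s = 2" "0 < (lams ! a) s" "0 < (lams ! b) s"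
            unfolding S_def by blast
          have "\<tau> t1 = \<tau> s" using UQ[OF \<open>k1 < length Bs\<close> s(3) \<open>t1 \<in> Bs ! k1\<close> s(5) \<open>dimc t1 = 2\<close> s(7)
              \<open>0 < (lams ! k1) t1\<close> s(8)] \<open>lab k1 t1 = M\<close> s(1) by blast
          then have "b < length Bs \<and> s \<in> Bs ! b \<and> dimc s = 2 \<and> 0 < (lams ! b) s \<and> lab b s = M' \<and> \<tau> s = \<tau> t"
            using s \<open>\<tau> t1 = \<tau> t\<close> by simp
          then show ?thesis by blast
        next
          case 2
          then obtain a b s where s: "M' = lab a s" "M = lab b s" "a < length Bs" "b < length Bs"
            "s \<in> Bs ! a" "s \<in> Bs ! b" "dimc s = 2" "0 < (lams ! a) s" "0 < (lams ! b) s"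
            unfolding S_def by blast
          have "\<tau> t1 = \<tau> s" using UQ[OF \<open>k1 < length Bs\<close> s(4) \<open>t1 \<in> Bs ! k1\<close> s(6) \<open>dimc t1 = 2\<close> s(7)
              \<open>0 < (lams ! k1) t1\<close> s(9)] \<open>lab k1 t1 = M\<close> s(2) by blast
          then have "a < length Bs \<and> s \<in> Bs ! a \<and> dimc s = 2 \<and> 0 < (lams ! a) s \<and> lab a s = M' \<and> \<tau> s = \<tau> t"
            using s \<open>\<tau> t1 = \<tau> t\<close> by simp
          then show ?thesis by blast
        qed
      qed
    qed
  qed
  define cl where "cl = (\<lambda>u v. \<forall>k k'. k < length Bs \<longrightarrow> k' < length Bs \<longrightarrow> u \<in> Bs ! k \<longrightarrow> v \<in> Bs ! k' \<longrightarrow>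
        (lab k u, lab k' v) \<in> R)"
  have C0: "\<And>u. u \<in> ?T \<Longrightarrow> dimc u = 2 \<Longrightarrow> 0 < \<tau> u \<Longrightarrow> cl u u"
  proof -
    fix u assume u: "u \<in> ?T" "dimc u = 2" "0 < \<tau> u"
    show "cl u u" unfolding cl_def
    proof (intro allI impI)
      fix k k' assume k: "k < length Bs" "k' < length Bs" "u \<in> Bs ! k" "u \<in> Bs ! k'"
      show "(lab k u, lab k' u) \<in> R"
      proof (cases "k = k'")
        case True then show ?thesis unfolding R_def by simp
      next
        case False
        have "0 < (lams ! k) u" "0 < (lams ! k') u" using P k u by auto
        then have "(lab k u, lab k' u) \<in> S" unfolding S_def using k u False by blast
        then show ?thesis unfolding R_def by blast
      qed
    qed
  qed
  have C1: "\<And>x y. x \<in> actset \<tau> ?T \<Longrightarrow> y \<in> actset \<tau> ?T \<Longrightarrow> theta \<tau> ?T x = theta \<tau> ?T y \<Longrightarrow> cconn ?T x y \<Longrightarrow>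
     \<exists>k<length Bs. x \<in> Bs ! k \<and> y \<in> Bs ! k \<and> (lams ! k) x = (lams ! k) y"
  proof -
    fix x y assume x: "x \<in> actset \<tau> ?T" and y: "y \<in> actset \<tau> ?T" and th: "theta \<tau> ?T x = theta \<tau> ?T y"
      and c: "cconn ?T x y"
    obtain t where t: "t \<in> ?T" "x \<in> cobd ?T t" "y \<in> cobd ?T t" using c unfolding cconn_def by blast
    obtain B where B: "B \<in> blocks as1 as2 as3" "x \<in> B" "y \<in> B" using blk_pair[OF vb t] by blast
    obtain k where k: "k < length Bs" "Bs ! k = B" using B(1) Bs(2) by (metis in_set_conv_nth)
    have dx: "dimc x = 2" and dy: "dimc y = 2" using x y unfolding actset_def by auto
    have tx: "theta (lams ! k) (Bs ! k) x = theta \<tau> ?T x" using TH[OF k(1) _ dx] B k by blast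
    have ty: "theta (lams ! k) (Bs ! k) y = theta \<tau> ?T y" using TH[OF k(1) _ dy] B k by blast
    have xA: "x \<in> actset (lams ! k) (Bs ! k)" using x tx B k dx unfolding actset_def by auto
    have yA: "y \<in> actset (lams ! k) (Bs ! k)" using y ty B k dy unfolding actset_def by auto
    have "(x, y) \<in> prel ?T (lams ! k) (Bs ! k) x" unfolding prel_def using xA yA tx ty th c by auto
    then have "(lams ! k) x = (lams ! k) y" using L2(2)[OF LB[OF k(1)]] xA yA tx ty th by blast
    then show "\<exists>k<length Bs. x \<in> Bs ! k \<and> y \<in> Bs ! k \<and> (lams ! k) x = (lams ! k) y" using k B by blast
  qed
  have actpos: "\<And>x. x \<in> actset \<tau> ?T \<Longrightarrow> 0 < \<tau> x"
    using L2pos[OF LT] unfolding actset_def by blast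
  have C2: "\<And>u v. u \<in> actset \<tau> ?T \<Longrightarrow> (u, v) \<in> (prel ?T \<tau> ?T u)\<^sup>* \<Longrightarrow> cl u v"
  proof -
    fix u v assume u: "u \<in> actset \<tau> ?T" and p: "(u, v) \<in> (prel ?T \<tau> ?T u)\<^sup>*"
    from p show "cl u v"
    proof (induction rule: rtrancl_induct)
      case base then show ?case using C0 u actpos unfolding actset_def by blast
    next
      case (step x y)
      from step.hyps(2) have x: "x \<in> actset \<tau> ?T" and y: "y \<in> actset \<tau> ?T"
        and th: "theta \<tau> ?T x = theta \<tau> ?T y" and c: "cconn ?T x y" unfolding prel_def by auto
      obtain k0 where k0: "k0 < length Bs" "x \<in> Bs ! k0" "y \<in> Bs ! k0" "(lams ! k0) x = (lams ! k0) y"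
        using C1[OF x y th c] by blast
      have cyy: "cl y y" using C0 y actpos unfolding actset_def by blast
      show ?case unfolding cl_def
      proof (intro allI impI)
        fix k k' assume kk: "k < length Bs" "k' < length Bs" "u \<in> Bs ! k" "y \<in> Bs ! k'"
        have a: "(lab k u, lab k0 x) \<in> R" using step.IH kk k0 unfolding cl_def by blast
        have "lab k0 x = lab k0 y" using k0 unfolding lab_def by simp
        with a have a': "(lab k u, lab k0 y) \<in> R" by simp
        have "(lab k0 y, lab k' y) \<in> R" using cyy kk k0 unfolding cl_def by blast
        then show "(lab k u, lab k' y) \<in> R" using Rtr[OF a'] by blast
      qed
    qed
  qed
  have cov: "\<And>u. u \<in> ?T \<Longrightarrow> \<exists>k<length Bs. u \<in> Bs ! k"
    using blk_cover[OF vb] Bs(2) by (metis in_set_conv_nth)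
  have Z: "\<And>u k. k < length Bs \<Longrightarrow> u \<in> Bs ! k \<Longrightarrow> dimc u = 2 \<Longrightarrow> (\<tau> u = 0 \<longleftrightarrow> \<tau>' u = 0)"
  proof -
    fix u k assume k: "k < length Bs" and u: "u \<in> Bs ! k" and d: "dimc u = 2"
    show "\<tau> u = 0 \<longleftrightarrow> \<tau>' u = 0"
    proof (cases "\<tau> u = 0")
      case True then show ?thesis using P[OF k u d] L3[OF k u d] by simp
    next
      case False
      then have p: "0 < (lams ! k) u" using P[OF k u d] by simp
      have "(lab k u, rep (lab k u)) \<in> R" using L1[OF k u d p] .
      then have "0 < rep (lab k u)" using R_pos[OF _ Spos] p unfolding R_def lab_def by simp
      then show ?thesis using L3[OF k u d] p False by simp
    qed
  qed
  show ?thesis unfolding label_iso_def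
  proof (intro conjI ballI)
    fix u assume "u \<in> {t \<in> ?T. dimc t = 2}"
    then have uT: "u \<in> ?T" and d: "dimc u = 2" by auto
    obtain k where k: "k < length Bs" "u \<in> Bs ! k" using cov[OF uT] by blast
    show "\<tau> u = 0 \<longleftrightarrow> \<tau>' u = 0" using Z[OF k d] .
  next
    fix u v assume "u \<in> {t \<in> ?T. dimc t = 2}" "v \<in> {t \<in> ?T. dimc t = 2}"
    then have uT: "u \<in> ?T" and du: "dimc u = 2" and vT: "v \<in> ?T" and dv: "dimc v = 2" by auto
    obtain k where k: "k < length Bs" "u \<in> Bs ! k" using cov[OF uT] by blast
    obtain k' where k': "k' < length Bs" "v \<in> Bs ! k'" using cov[OF vT] by blast
    note Zu = Z[OF k du] and Zv = Z[OF k' dv]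
    show "\<tau> u = \<tau> v \<longleftrightarrow> \<tau>' u = \<tau>' v"
    proof (cases "\<tau> u = 0 \<or> \<tau> v = 0")
      case True then show ?thesis using Zu Zv by auto
    next
      case False
      then have pu: "0 < (lams ! k) u" and pv: "0 < (lams ! k') v" using P k k' du dv by auto
      have tu: "\<tau>' u = rep (lab k u)" using L3[OF k du] pu by simp
      have tv: "\<tau>' v = rep (lab k' v)" using L3[OF k' dv] pv by simp
      have uA: "u \<in> actset \<tau> ?T" using L2pos[OF LT uT du] False uT du unfolding actset_def by auto
      have vA: "v \<in> actset \<tau> ?T" using L2pos[OF LT vT dv] False vT dv unfolding actset_def by auto
      show ?thesis
      proof
        assume "\<tau> u = \<tau> v"
        then have "(u, v) \<in> (prel ?T \<tau> ?T u)\<^sup>*" using L2(2)[OF LT] uA vA by blast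
        then have "cl u v" using C2 uA by blast
        then have "(lab k u, lab k' v) \<in> R" using k k' unfolding cl_def by blast
        then show "\<tau>' u = \<tau>' v" using L2'[OF \<open>(lab k u, lab k' v) \<in> R\<close>] tu tv by simp
      next
        assume "\<tau>' u = \<tau>' v"
        then have e: "rep (lab k u) = rep (lab k' v)" using tu tv by simp
        have "(rep (lab k' v), lab k' v) \<in> R" using Rsym[OF L1[OF k' dv pv]] by simp
        then have "(rep (lab k u), lab k' v) \<in> R" using e by simp
        then have "(lab k u, lab k' v) \<in> R" using Rtr[OF L1[OF k du pu]] by blast
        then have "\<exists>k'' t''. k'' < length Bs \<and> t'' \<in> Bs ! k'' \<and> dimc t'' = 2 \<and> 0 < (lams ! k'') t'' \<and>
            lab k'' t'' = lab k' v \<and> \<tau> t'' = \<tau> u"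
          using INV[rule_format, of "lab k u" "lab k' v" k u] k du pu by blast
        then obtain k'' t'' where h: "k'' < length Bs" "t'' \<in> Bs ! k''" "dimc t'' = 2" "0 < (lams ! k'') t''"
            "lab k'' t'' = lab k' v" "\<tau> t'' = \<tau> u" by blast
        have "\<tau> t'' = \<tau> v" using UQ[OF h(1) k'(1) h(2) k'(2) h(3) dv h(4) pv h(5)] .
        then show "\<tau> u = \<tau> v" using h(6) by simp
      qed
    qed
  qed
qed

end
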